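(* The floor function is not definable in $Q_0(\mathbf s)$: there is no $\Sigma_{ms}$-term $t(x)$ with only variable $x$ such that $t(q)=\lfloor q\rfloor$ for all rationals $q$ (evaluated in $Q_0(\mathbf s)$), where $\lfloor q\rfloor=\max\{n\in\mathbb Z\mid n\le q\}$.
   Context: $\Sigma_m=(0,1,+,\cdot,-,{}^{-1})$ and $\Sigma_{ms}=\Sigma_m$ extended with a unary symbol $\mathbf s$. $Q_0$ is the field of rational numbers with the total inverse $q^{-1}=1/q$ for $q\neq0$, $0^{-1}=0$. $Q_0(\mathbf s)$ is $Q_0$ expanded with the sign function $\mathbf s(q)=-1$ if $q<0$, $0$ if $q=0$, $1$ if $q>0$. *)

theory Defs
  imports Main "HOL.Rat"
begin

datatype ms_term =
    Var
  | Zero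
  | One
  | Add ms_term ms_term
  | Mul ms_term ms_term
  | Neg ms_term
  | Inv ms_term
  | Sgn ms_term

text \<open>Evaluation in Q_0(s): rationals with total inverse (inverse 0 = 0 in Isabelle's rat)
  and the sign function.\<close>
fun eval_ms :: "ms_term \<Rightarrow> rat \<Rightarrow> rat" where
  "eval_ms Var q = q"
| "eval_ms Zero q = 0"
| "eval_ms One q = 1"
| "eval_ms (Add t u) q = eval_ms t q + eval_ms u q"
| "eval_ms (Mul t u) q = eval_ms t q * eval_ms u q"
| "eval_ms (Neg t) q = - eval_ms t q"
| "eval_ms (Inv t) q = inverse (eval_ms t q)"
| "eval_ms (Sgn t) q = (if eval_ms t q < 0 then -1 else if eval_ms t q = 0 then 0 else 1)"

end

theory Submission
  imports Defs "HOL-Computational_Algebra.Polynomial"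
begin

lemma sign_ev:
  fixes p :: "rat poly"
  assumes "p \<noteq> 0"
  shows "\<exists>c>0. eventually (\<lambda>x. poly p x \<ge> c) at_top \<or> eventually (\<lambda>x. poly p x \<le> -c) at_top"
  using assms
proof (induct p rule: pCons_induct)
  case 0
  then show ?case by simp
next
  case (pCons a q)
  show ?case
  proof (cases "q = 0")
    case True
    then have a: "a \<noteq> 0" using pCons by simp
    show ?thesis
    proof (cases "a > 0")
      case True
      then show ?thesis using \<open>q = 0\<close> by (intro exI[of _ a]) auto
    next
      case False
      then show ?thesis using \<open>q = 0\<close> a by (intro exI[of _ "-a"]) auto
    qed
  next
    case False
    then obtain c where c: "c > 0"
      and h: "eventually (\<lambda>x. poly q x \<ge> c) at_top \<or> eventually (\<lambda>x. poly q x \<le> -c) at_top"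
      using pCons by blast
    have ev: "eventually (\<lambda>x. x \<ge> max 0 (max ((1-a)/c) ((1+a)/c))) at_top"
      by (rule eventually_ge_at_top)
    from h show ?thesis
    proof
      assume e: "eventually (\<lambda>x. poly q x \<ge> c) at_top"
      have "eventually (\<lambda>x. poly (pCons a q) x \<ge> 1) at_top"
        using eventually_conj[OF e ev]
      proof (rule eventually_mono)
        fix x :: rat assume "c \<le> poly q x \<and> max 0 (max ((1-a)/c) ((1+a)/c)) \<le> x"
        then have x0: "x \<ge> 0" and xc: "x \<ge> (1-a)/c" and qc: "poly q x \<ge> c" by auto
        have "x * c \<le> x * poly q x" using x0 qc by (simp add: mult_left_mono)
        moreover have "1 - a \<le> x * c" using xc c by (simp add: field_simps)
        ultimately show "poly (pCons a q) x \<ge> 1" by simp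
      qed
      then show ?thesis by (intro exI[of _ 1]) auto
    next
      assume e: "eventually (\<lambda>x. poly q x \<le> -c) at_top"
      have "eventually (\<lambda>x. poly (pCons a q) x \<le> -1) at_top"
        using eventually_conj[OF e ev]
      proof (rule eventually_mono)
        fix x :: rat assume "poly q x \<le> -c \<and> max 0 (max ((1-a)/c) ((1+a)/c)) \<le> x"
        then have x0: "x \<ge> 0" and xc: "x \<ge> (1+a)/c" and qc: "poly q x \<le> -c" by auto
        have "x * poly q x \<le> x * (-c)" using qc x0 by (rule mult_left_mono)
        moreover have "1 + a \<le> x * c" using xc c by (simp add: field_simps)
        ultimately show "poly (pCons a q) x \<le> -1" by simp
      qed
      then show ?thesis by (intro exI[of _ 1]) auto
    qed
  qed
qed

lemma ev_nonzero:
  fixes p :: "rat poly"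
  assumes "p \<noteq> 0"
  shows "eventually (\<lambda>x. poly p x \<noteq> 0) at_top"
proof -
  obtain c where c: "c > 0" and
    h: "eventually (\<lambda>x. poly p x \<ge> c) at_top \<or> eventually (\<lambda>x. poly p x \<le> -c) at_top"
    using sign_ev[OF assms] by blast
  from h show ?thesis
  proof
    assume "eventually (\<lambda>x. poly p x \<ge> c) at_top"
    then show ?thesis by (rule eventually_mono) (use c in auto)
  next
    assume "eventually (\<lambda>x. poly p x \<le> -c) at_top"
    then show ?thesis by (rule eventually_mono) (use c in auto)
  qed
qed

lemma rat_form:
  "\<exists>p r. eventually (\<lambda>x. poly r x \<noteq> 0 \<and> eval_ms t x = poly p x / poly r x) at_top"
proof (induct t)
  case Var
  show ?case by (intro exI[of _ "[:0,1:]"] exI[of _ 1]) simp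
next
  case Zero
  show ?case by (intro exI[of _ 0] exI[of _ 1]) simp
next
  case One
  show ?case by (intro exI[of _ 1] exI[of _ 1]) simp
next
  case (Add t u)
  then obtain p1 r1 p2 r2 where
    e1: "eventually (\<lambda>x. poly r1 x \<noteq> 0 \<and> eval_ms t x = poly p1 x / poly r1 x) at_top" and
    e2: "eventually (\<lambda>x. poly r2 x \<noteq> 0 \<and> eval_ms u x = poly p2 x / poly r2 x) at_top"
    by blast
  show ?case
    by (intro exI[of _ "p1 * r2 + p2 * r1"] exI[of _ "r1 * r2"],
        rule eventually_mono[OF eventually_conj[OF e1 e2]]) (auto simp: field_simps)
next
  case (Mul t u)
  then obtain p1 r1 p2 r2 where
    e1: "eventually (\<lambda>x. poly r1 x \<noteq> 0 \<and> eval_ms t x = poly p1 x / poly r1 x) at_top" and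
    e2: "eventually (\<lambda>x. poly r2 x \<noteq> 0 \<and> eval_ms u x = poly p2 x / poly r2 x) at_top"
    by blast
  show ?case
    by (intro exI[of _ "p1 * p2"] exI[of _ "r1 * r2"],
        rule eventually_mono[OF eventually_conj[OF e1 e2]]) (auto simp: field_simps)
next
  case (Neg t)
  then obtain p1 r1 where
    e1: "eventually (\<lambda>x. poly r1 x \<noteq> 0 \<and> eval_ms t x = poly p1 x / poly r1 x) at_top"
    by blast
  show ?case
    by (intro exI[of _ "- p1"] exI[of _ "r1"],
        rule eventually_mono[OF e1]) (auto simp: field_simps)
next
  case (Inv t)
  then obtain p1 r1 where
    e1: "eventually (\<lambda>x. poly r1 x \<noteq> 0 \<and> eval_ms t x = poly p1 x / poly r1 x) at_top"
    by blast
  show ?case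
  proof (cases "p1 = 0")
    case True
    show ?thesis
      by (intro exI[of _ 0] exI[of _ 1], rule eventually_mono[OF e1]) (auto simp: True)
  next
    case False
    show ?thesis
      by (intro exI[of _ r1] exI[of _ p1],
          rule eventually_mono[OF eventually_conj[OF e1 ev_nonzero[OF False]]]) auto
  qed
next
  case (Sgn t)
  then obtain p1 r1 where
    e1: "eventually (\<lambda>x. poly r1 x \<noteq> 0 \<and> eval_ms t x = poly p1 x / poly r1 x) at_top"
    by blast
  show ?case
  proof (cases "p1 = 0")
    case True
    show ?thesis
      by (intro exI[of _ 0] exI[of _ 1], rule eventually_mono[OF e1]) (auto simp: True)
  next
    case False
    have "r1 \<noteq> 0"
    proof
      assume "r1 = 0"
      with e1 have "eventually (\<lambda>x. False) at_top" by (auto elim: eventually_mono)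
      then have "\<exists>N::rat. \<forall>x\<ge>N. False" by (rule eventually_at_top_linorder[THEN iffD1])
      then show False by auto
    qed
    with False have pr: "p1 * r1 \<noteq> 0" by simp
    obtain c where c: "c > 0" and
      h: "eventually (\<lambda>x. poly (p1*r1) x \<ge> c) at_top \<or> eventually (\<lambda>x. poly (p1*r1) x \<le> -c) at_top"
      using sign_ev[OF pr] by blast
    from h show ?thesis
    proof
      assume e: "eventually (\<lambda>x. poly (p1*r1) x \<ge> c) at_top"
      show ?thesis
      proof (intro exI[of _ 1] exI[of _ 1], rule eventually_mono[OF eventually_conj[OF e1 e]])
        fix x assume a: "(poly r1 x \<noteq> 0 \<and> eval_ms t x = poly p1 x / poly r1 x) \<and> c \<le> poly (p1 * r1) x"
        then have "poly p1 x * poly r1 x > 0" using c by simp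
        then have "poly p1 x / poly r1 x > 0" by (simp add: zero_less_mult_iff zero_less_divide_iff)
        then have e0: "eval_ms t x > 0" using a by simp
        show "poly 1 x \<noteq> 0 \<and> eval_ms (Sgn t) x = poly 1 x / poly 1 x" using e0 by simp
      qed
    next
      assume e: "eventually (\<lambda>x. poly (p1*r1) x \<le> -c) at_top"
      show ?thesis
      proof (rule exI[of _ "-1"], rule exI[of _ 1], rule eventually_mono[OF eventually_conj[OF e1 e]])
        fix x assume a: "(poly r1 x \<noteq> 0 \<and> eval_ms t x = poly p1 x / poly r1 x) \<and> poly (p1 * r1) x \<le> -c"
        then have "poly p1 x * poly r1 x < 0" using c by simp
        then have "poly p1 x / poly r1 x < 0" by (simp add: mult_less_0_iff divide_less_0_iff)
        then have e0: "eval_ms t x < 0" using a by simp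
        show "poly 1 x \<noteq> 0 \<and> eval_ms (Sgn t) x = poly (-1) x / poly 1 x" using e0 by simp
      qed
    qed
  qed
qed

theorem corollary5:
  shows "\<not> (\<exists>t :: ms_term. \<forall>q :: rat. eval_ms t q = of_int \<lfloor>q\<rfloor>)"
proof
  assume "\<exists>t :: ms_term. \<forall>q :: rat. eval_ms t q = of_int \<lfloor>q\<rfloor>"
  then obtain t where t: "\<And>q. eval_ms t q = of_int \<lfloor>q\<rfloor>" by blast
  obtain p r where e: "eventually (\<lambda>x. poly r x \<noteq> 0 \<and> eval_ms t x = poly p x / poly r x) at_top"
    using rat_form by blast
  define h where "h = p - [:0,1:] * r"
  show False
  proof (cases "h = 0")
    case False
    have "eventually (\<lambda>x. (poly r x \<noteq> 0 \<and> eval_ms t x = poly p x / poly r x) \<and> poly h x \<noteq> 0) at_top"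
      by (rule eventually_conj[OF e ev_nonzero[OF False]])
    then obtain N where N0: "\<forall>x\<ge>N. (poly r x \<noteq> 0 \<and> eval_ms t x = poly p x / poly r x) \<and> poly h x \<noteq> 0"
      unfolding eventually_at_top_linorder by blast
    have N: "\<And>x. x \<ge> N \<Longrightarrow> poly r x \<noteq> 0 \<and> eval_ms t x = poly p x / poly r x \<and> poly h x \<noteq> 0"
      using N0 by blast
    define x where "x = (of_int \<lceil>N\<rceil> :: rat)"
    have "x \<ge> N" unfolding x_def by (simp add: le_of_int_ceiling)
    from N[OF this] have "of_int \<lfloor>x\<rfloor> = poly p x / poly r x" "poly r x \<noteq> 0" "poly h x \<noteq> 0"
      using t by auto
    moreover have "of_int \<lfloor>x\<rfloor> = x" unfolding x_def by simp
    ultimately have "poly p x = x * poly r x" by (simp add: field_simps)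
    then have "poly h x = 0" unfolding h_def by simp
    with \<open>poly h x \<noteq> 0\<close> show False by simp
  next
    case True
    then have pr: "p = [:0,1:] * r" unfolding h_def by simp
    obtain N where N0: "\<forall>x\<ge>N. poly r x \<noteq> 0 \<and> eval_ms t x = poly p x / poly r x"
      using e unfolding eventually_at_top_linorder by blast
    have N: "\<And>x. x \<ge> N \<Longrightarrow> poly r x \<noteq> 0 \<and> eval_ms t x = poly p x / poly r x"
      using N0 by blast
    define n where "n = \<lceil>N\<rceil>"
    define x where "x = (of_int n + 1/2 :: rat)"
    have "x \<ge> N" unfolding x_def n_def using le_of_int_ceiling[of N] by linarith
    from N[OF this] have "of_int \<lfloor>x\<rfloor> = poly p x / poly r x" "poly r x \<noteq> 0"
      using t by auto
    then have "of_int \<lfloor>x\<rfloor> = x" by (simp add: pr)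
    moreover have "\<lfloor>x\<rfloor> = n" unfolding x_def by (intro floor_unique) auto
    ultimately show False unfolding x_def by simp
  qed
qed

end
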